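(* Let $(X,d)$ be a complete metric space, let $E,F:(0,\infty)\to\mathbb{R}$ satisfy condition $(C_2)$ below, and let $T:X\to X$ be a contractive mapping such that for all $x,y\in X$ with $Tx\neq Ty$, $F(d(Tx,Ty))\le E(d(x,y))$. Then $T$ is a CJMP-contraction, and hence $T$ is a Picard operator. Condition $(C_2)$: for every $t>0$, every sequence $(t_n)_{n\in\mathbb{N}}\subset(t,\infty)$ with $t_n\to t$, and every sequence $(s_n)_{n\in\mathbb{N}}$ with $t<s_n<t_n$ for all $n$, one has $\limsup_{n\to\infty}(F(s_n)-E(t_n))>0$.
   Context: A map $T:X\to X$ is contractive if $d(Tx,Ty)<d(x,y)$ for all $x\neq y$. $T$ is a CJMP-contraction if it is contractive and for every $\varepsilon>0$ there exists $\delta>0$ such that for all $x,y\in X$, $\varepsilon<d(x,y)<\varepsilon+\delta$ implies $d(Tx,Ty)\le\varepsilon$. $T$ is a Picard operator if $T$ has a unique fixed point $u\in X$ and for every $x\in X$ the sequence $(T^nx)_{n\in\mathbb{N}}$ converges to $u$. *)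

theory Defs
  imports "HOL-Analysis.Analysis"
begin

definition contractive :: "('a::metric_space \<Rightarrow> 'a) \<Rightarrow> bool" where
  "contractive T \<longleftrightarrow> (\<forall>x y. x \<noteq> y \<longrightarrow> dist (T x) (T y) < dist x y)"

definition cjmp_contraction :: "('a::metric_space \<Rightarrow> 'a) \<Rightarrow> bool" where
  "cjmp_contraction T \<longleftrightarrow> contractive T \<and>
     (\<forall>\<epsilon>>0. \<exists>\<delta>>0. \<forall>x y. \<epsilon> < dist x y \<and> dist x y < \<epsilon> + \<delta> \<longrightarrow> dist (T x) (T y) \<le> \<epsilon>)"

definition picard_operator :: "('a::metric_space \<Rightarrow> 'a) \<Rightarrow> bool" where
  "picard_operator T \<longleftrightarrow> (\<exists>!u. T u = u) \<and>
     (\<forall>u. T u = u \<longrightarrow> (\<forall>x. (\<lambda>n. (T ^^ n) x) \<longlonglongrightarrow> u))"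

text \<open>Condition (C2) for functions E, F defined on (0,\<infinity>) (values elsewhere irrelevant).\<close>
definition cond_C2 :: "(real \<Rightarrow> real) \<Rightarrow> (real \<Rightarrow> real) \<Rightarrow> bool" where
  "cond_C2 E F \<longleftrightarrow> (\<forall>t>0. \<forall>tn sn :: nat \<Rightarrow> real.
      (\<forall>n. t < tn n) \<longrightarrow> tn \<longlonglongrightarrow> t \<longrightarrow> (\<forall>n. t < sn n \<and> sn n < tn n) \<longrightarrow>
      limsup (\<lambda>n. ereal (F (sn n) - E (tn n))) > 0)"

end

theory Submission
  imports Defs
begin

lemma contr_le:
  assumes "contractive T"
  shows "dist (T x) (T y) \<le> dist x y"
  using assms unfolding contractive_def
  by (cases "x = y") (auto intro: less_imp_le)

lemma orbit_conv:
  fixes T :: "'a::{metric_space, complete_space} \<Rightarrow> 'a"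
  assumes C: "contractive T"
    and H: "\<forall>\<epsilon>>0. \<exists>\<delta>>0. \<forall>x y. \<epsilon> < dist x y \<and> dist x y < \<epsilon> + \<delta> \<longrightarrow> dist (T x) (T y) \<le> \<epsilon>"
  shows "\<exists>u. (\<lambda>n. (T ^^ n) x) \<longlonglongrightarrow> u \<and> T u = u"
proof -
  define s where "s n = (T ^^ n) x" for n
  have sS: "s (Suc n) = T (s n)" for n by (simp add: s_def)
  define d where "d n = dist (s n) (s (Suc n))" for n
  have dmono: "d (Suc n) \<le> d n" for n
    unfolding d_def sS[of "Suc n"] sS[of n] using contr_le[OF C] by simp
  have dmono2: "d m \<le> d n" if "n \<le> m" for m n
    using that
  proof (induction m rule: dec_induct)
    case base then show ?case by simp
  next
    case (step m) then show ?case using dmono[of m] by linarith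
  qed
  have dsmall: "\<exists>N. \<forall>n\<ge>N. d n < \<eta>" if "\<eta> > 0" for \<eta>
  proof (rule ccontr)
    assume A: "\<not> ?thesis"
    have ge: "d n \<ge> \<eta>" for n
    proof (rule ccontr)
      assume "\<not> d n \<ge> \<eta>"
      then have "\<forall>m\<ge>n. d m < \<eta>" using dmono2 by force
      then show False using A by blast
    qed
    define r where "r = Inf (range d)"
    have bdd: "bdd_below (range d)"
      by (rule bdd_belowI[of _ 0]) (auto simp: d_def)
    have rle: "r \<le> d n" for n unfolding r_def by (rule cInf_lower) (auto simp: bdd)
    have rge: "r \<ge> \<eta>" unfolding r_def by (rule cInf_greatest) (auto simp: ge)
    then have rpos: "r > 0" using that by linarith
    have dlt: "d (Suc n) < d n" for n
    proof -
      have "s n \<noteq> s (Suc n)" using ge[of n] that by (auto simp: d_def)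
      then show ?thesis using C unfolding contractive_def d_def sS[of "Suc n"] sS[of n]
        by (metis sS)
    qed
    have dgt: "d n > r" for n using dlt[of n] rle[of "Suc n"] by linarith
    obtain \<delta> where \<delta>: "\<delta> > 0" "\<forall>x y. r < dist x y \<and> dist x y < r + \<delta> \<longrightarrow> dist (T x) (T y) \<le> r"
      using H rpos by blast
    have "\<exists>n. d n < r + \<delta>"
    proof (rule ccontr)
      assume "\<not> ?thesis"
      then have "r + \<delta> \<le> r" unfolding r_def
        by (intro cInf_greatest) (auto simp: not_less)
      then show False using \<delta> by simp
    qed
    then obtain n where n: "d n < r + \<delta>" by blast
    have "d (Suc n) \<le> r" using \<delta>(2) n dgt[of n] unfolding d_def sS[of "Suc n"] sS[of n]
      by (simp add: sS)
    then show False using dgt[of "Suc n"] by linarith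
  qed
  have key: "\<exists>N. \<forall>m\<ge>N. dist (s N) (s m) < 2 * \<epsilon>" if epos: "\<epsilon> > 0" for \<epsilon>
  proof -
    obtain \<delta>0 where \<delta>0: "\<delta>0 > 0" "\<forall>x y. \<epsilon> < dist x y \<and> dist x y < \<epsilon> + \<delta>0 \<longrightarrow> dist (T x) (T y) \<le> \<epsilon>"
      using H epos by blast
    define \<delta> where "\<delta> = min \<delta>0 \<epsilon>"
    have \<delta>: "\<delta> > 0" "\<delta> \<le> \<epsilon>" "\<forall>x y. \<epsilon> < dist x y \<and> dist x y < \<epsilon> + \<delta> \<longrightarrow> dist (T x) (T y) \<le> \<epsilon>"
      using \<delta>0 epos unfolding \<delta>_def by auto
    obtain N where N: "\<forall>n\<ge>N. d n < \<delta>" using dsmall[OF \<delta>(1)] by blast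
    have "dist (s N) (s m) < \<epsilon> + \<delta>" if "N \<le> m" for m
      using that
    proof (induction m rule: dec_induct)
      case base then show ?case using \<delta> epos by simp
    next
      case (step m)
      have "dist (T (s N)) (T (s m)) \<le> \<epsilon>"
      proof (cases "dist (s N) (s m) \<le> \<epsilon>")
        case True then show ?thesis using contr_le[OF C, of "s N" "s m"] by linarith
      next
        case False then show ?thesis using \<delta>(3) step.IH by auto
      qed
      then have "dist (s (Suc N)) (s (Suc m)) \<le> \<epsilon>" by (simp add: sS)
      moreover have "dist (s N) (s (Suc m)) \<le> dist (s N) (s (Suc N)) + dist (s (Suc N)) (s (Suc m))"
        by (rule dist_triangle)
      moreover have "dist (s N) (s (Suc N)) < \<delta>" using N unfolding d_def by auto
      ultimately show ?case by linarith
    qed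
    then show ?thesis using \<delta> by (intro exI[of _ N]) force
  qed
  have "Cauchy s"
  proof (rule metric_CauchyI)
    fix e :: real assume e: "e > 0"
    obtain N where N: "\<forall>m\<ge>N. dist (s N) (s m) < 2 * (e/4)" using key[of "e/4"] e by auto
    show "\<exists>M. \<forall>m\<ge>M. \<forall>n\<ge>M. dist (s m) (s n) < e"
    proof (intro exI allI impI)
      fix m n assume "N \<le> m" "N \<le> n"
      then have "dist (s N) (s m) < e/2" "dist (s N) (s n) < e/2" using N by auto
      moreover have "dist (s m) (s n) \<le> dist (s N) (s m) + dist (s N) (s n)"
        by (rule dist_triangle3)
      ultimately show "dist (s m) (s n) < e" by linarith
    qed
  qed
  then obtain u where u: "s \<longlonglongrightarrow> u" using complete_UNIV convergent_def
    by (metis Cauchy_convergent_iff)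
  have "(\<lambda>n. T (s n)) \<longlonglongrightarrow> T u"
  proof (rule metric_LIMSEQ_I)
    fix r :: real assume "r > 0"
    then obtain M where "\<forall>n\<ge>M. dist (s n) u < r" using metric_LIMSEQ_D[OF u] by blast
    then show "\<exists>M. \<forall>n\<ge>M. dist (T (s n)) (T u) < r"
      using contr_le[OF C] by (meson le_less_trans)
  qed
  moreover have "(\<lambda>n. T (s n)) \<longlonglongrightarrow> u"
    using u LIMSEQ_Suc[OF u] by (simp add: sS[symmetric])
  ultimately have "T u = u" using LIMSEQ_unique by blast
  then show ?thesis using u unfolding s_def by blast
qed

lemma part1:
  assumes C2: "cond_C2 E F"
    and C: "contractive T"
    and H: "\<And>x y. T x \<noteq> T y \<Longrightarrow> F (dist (T x) (T y)) \<le> E (dist x y)"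
  shows "\<forall>\<epsilon>>0. \<exists>\<delta>>0. \<forall>x y. \<epsilon> < dist x y \<and> dist x y < \<epsilon> + \<delta> \<longrightarrow> dist (T x) (T y) \<le> \<epsilon>"
proof (rule ccontr)
  assume "\<not> ?thesis"
  then obtain \<epsilon> where e: "\<epsilon> > 0"
    and B: "\<forall>\<delta>>0. \<exists>x y. \<epsilon> < dist x y \<and> dist x y < \<epsilon> + \<delta> \<and> dist (T x) (T y) > \<epsilon>"
    by (auto simp: not_le)
  have "\<forall>n. \<exists>p. \<epsilon> < dist (fst p) (snd p) \<and> dist (fst p) (snd p) < \<epsilon> + 1 / (Suc n)
      \<and> dist (T (fst p)) (T (snd p)) > \<epsilon>"
  proof
    fix n
    obtain x y where "\<epsilon> < dist x y \<and> dist x y < \<epsilon> + 1 / (Suc n) \<and> dist (T x) (T y) > \<epsilon>"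
      using B[rule_format, of "1 / Suc n"] by auto
    then show "\<exists>p. \<epsilon> < dist (fst p) (snd p) \<and> dist (fst p) (snd p) < \<epsilon> + 1 / (Suc n)
      \<and> dist (T (fst p)) (T (snd p)) > \<epsilon>" by (intro exI[of _ "(x,y)"]) auto
  qed
  then obtain p where p: "\<And>n. \<epsilon> < dist (fst (p n)) (snd (p n)) \<and> dist (fst (p n)) (snd (p n)) < \<epsilon> + 1 / (Suc n)
      \<and> dist (T (fst (p n))) (T (snd (p n))) > \<epsilon>" by metis
  define tn where "tn n = dist (fst (p n)) (snd (p n))" for n
  define sn where "sn n = dist (T (fst (p n))) (T (snd (p n)))" for n
  have t1: "\<forall>n. \<epsilon> < tn n" using p tn_def by auto
  have snlt: "\<forall>n. \<epsilon> < sn n \<and> sn n < tn n"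
  proof
    fix n
    have "fst (p n) \<noteq> snd (p n)" using p[of n] e by auto
    then show "\<epsilon> < sn n \<and> sn n < tn n" using p[of n] C unfolding contractive_def sn_def tn_def by auto
  qed
  have "tn \<longlonglongrightarrow> \<epsilon>"
  proof -
    have "(\<lambda>n. \<epsilon> + 1 / real (Suc n)) \<longlonglongrightarrow> \<epsilon> + 0"
      by (intro tendsto_add tendsto_const) (rule LIMSEQ_inverse_real_of_nat[unfolded inverse_eq_divide])
    then have U: "(\<lambda>n. \<epsilon> + 1 / real (Suc n)) \<longlonglongrightarrow> \<epsilon>" by simp
    show ?thesis
    proof (rule real_tendsto_sandwich[OF _ _ tendsto_const U])
      show "\<forall>\<^sub>F n in sequentially. \<epsilon> \<le> tn n" using t1 by (auto intro!: always_eventually less_imp_le)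
      show "\<forall>\<^sub>F n in sequentially. tn n \<le> \<epsilon> + 1 / real (Suc n)"
        using p unfolding tn_def by (auto intro!: always_eventually less_imp_le)
    qed
  qed
  then have "limsup (\<lambda>n. ereal (F (sn n) - E (tn n))) > 0"
    using C2 e t1 snlt unfolding cond_C2_def by blast
  moreover have "limsup (\<lambda>n. ereal (F (sn n) - E (tn n))) \<le> 0"
  proof -
    have "F (sn n) - E (tn n) \<le> 0" for n
    proof -
      have "T (fst (p n)) \<noteq> T (snd (p n))" using p[of n] e by auto
      then show ?thesis using H unfolding sn_def tn_def by fastforce
    qed
    then have "limsup (\<lambda>n. ereal (F (sn n) - E (tn n))) \<le> limsup (\<lambda>n. ereal 0)"
      by (intro Limsup_mono) auto
    then show ?thesis using Limsup_const[of sequentially "ereal 0"] by (simp add: zero_ereal_def)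
  qed
  ultimately show False by simp
qed

theorem mainTheorem3:
  fixes T :: "'a::{metric_space, complete_space} \<Rightarrow> 'a"
    and E F :: "real \<Rightarrow> real"
  assumes "cond_C2 E F"
    and "contractive T"
    and "\<And>x y. T x \<noteq> T y \<Longrightarrow> F (dist (T x) (T y)) \<le> E (dist x y)"
  shows "cjmp_contraction T \<and> picard_operator T"
proof -
  have H: "\<forall>\<epsilon>>0. \<exists>\<delta>>0. \<forall>x y. \<epsilon> < dist x y \<and> dist x y < \<epsilon> + \<delta> \<longrightarrow> dist (T x) (T y) \<le> \<epsilon>"
    by (rule part1[OF assms])
  have cj: "cjmp_contraction T" using H assms(2) unfolding cjmp_contraction_def by blast
  obtain u where u: "T u = u" using orbit_conv[OF assms(2) H, of undefined] by blast
  have uniq: "v = u" if "T v = v" for v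
  proof (rule ccontr)
    assume "v \<noteq> u"
    then have "dist (T v) (T u) < dist v u" using assms(2) unfolding contractive_def by blast
    then show False using that u by simp
  qed
  have conv: "(\<lambda>n. (T ^^ n) x) \<longlonglongrightarrow> w" if "T w = w" for w x
  proof -
    obtain u' where "(\<lambda>n. (T ^^ n) x) \<longlonglongrightarrow> u'" "T u' = u'" using orbit_conv[OF assms(2) H] by blast
    then show ?thesis using uniq[of u'] uniq[of w] that by simp
  qed
  have "picard_operator T" unfolding picard_operator_def using u uniq conv by blast
  then show ?thesis using cj by blast
qed

end
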